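(* Consider the system $\dot x(t) = f(x(t))$, $x(0)=x_0$, where $x\in\mathbb R^n$, $f:\mathbb R^n\to\mathbb R^n$ is continuous with $f(0)=0$, and solutions exist and are unique. Let $V:\mathbb R^n\to\mathbb R$ be a continuously differentiable, positive definite, proper function satisfying \[ \dot V(x) \leq -\alpha_1V(x)^{\gamma_1}-\alpha_2V(x)^{\gamma_2}+\delta_1V(x) \] for all $x\in\mathbb R^n\setminus\{0\}$ along the trajectories of the system, where $\alpha_1,\alpha_2>0$, $\delta_1\in\mathbb R$, $\gamma_1 = 1+\frac{1}{\mu}$, $\gamma_2 = 1-\frac{1}{\mu}$ for some $\mu>1$. Let $r\coloneqq \frac{\delta_1}{2\sqrt{\alpha_1\alpha_2}}$, let $0<k<1$, $k_1 = \sqrt{\frac{4\alpha_1\alpha_2-\delta_1^2}{4\alpha_1^2}}$ and $k_2 = -\frac{\delta_1}{\sqrt{4\alpha_1\alpha_2-\delta_1^2}}$. Then there exists a neighborhood $D\subseteq\mathbb R^n$ of the origin such that for all $x(0)\in D$, the trajectories satisfy $x(t)\in D$ for all $t\geq 0$ and reach the origin within a fixed time $T$, where \[ D = \begin{cases} \mathbb R^n, & r<1,\\[2pt] \left\{x \;\middle|\; V(x)\leq k^\mu\left(\frac{\delta_1-\sqrt{\delta_1^2-4\alpha_1\alpha_2}}{2\alpha_1}\right)^\mu\right\}, & r\geq 1,\end{cases} \] and \[ T\leq \begin{cases} \frac{\mu\pi}{2\sqrt{\alpha_1\alpha_2}}, & r\leq 0,\\[2pt] \frac{\mu}{\alpha_1k_1}\left(\frac{\pi}{2}-\tan^{-1}k_2\right),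 & 0\leq r<1,\\[2pt] \frac{\mu k}{(1-k)\sqrt{\alpha_1\alpha_2}}, & r\geq 1.\end{cases} \]
   Context: $\dot V(x)$ denotes the time derivative of $V$ along trajectories, i.e. $\frac{\partial V}{\partial x}(x) f(x)$. A function is proper here in the sense of radially unbounded (sublevel sets are compact). $\tan^{-1}$ is the principal inverse tangent. *)

theory Defs
  imports "HOL-Analysis.Analysis"
begin

definition is_solution :: "(real^'n \<Rightarrow> real^'n) \<Rightarrow> real^'n \<Rightarrow> (real \<Rightarrow> real^'n) \<Rightarrow> bool" where
  "is_solution f x0 x \<longleftrightarrow> x 0 = x0 \<and>
     (\<forall>t\<ge>0. (x has_vector_derivative f (x t)) (at t within {0..}))"

end

theory Submission
  imports Defs
begin


lemma deriv_interior:
  fixes v :: "real \<Rightarrow> real"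
  assumes "(v has_real_derivative D) (at t within {0..})" "t > 0"
  shows "(v has_real_derivative D) (at t)"
proof -
  have "t \<in> interior {0::real..}" using assms(2) by simp
  then have "at t within {0..} = at t" by (rule at_within_interior)
  then show ?thesis using assms(1) by simp
qed

lemma deriv_cont:
  fixes v v' :: "real \<Rightarrow> real"
  assumes "\<forall>t\<ge>0. (v has_real_derivative v' t) (at t within {0..})" "S \<subseteq> {0..}"
  shows "continuous_on S v"
proof -
  have "continuous_on {0..} v"
    unfolding continuous_on_eq_continuous_within
  proof
    fix t :: real assume "t \<in> {0..}"
    then show "continuous (at t within {0..}) v" using assms(1) DERIV_continuous[of v "v' t" t "{0..}"] by auto
  qed
  then show ?thesis using assms(2) continuous_on_subset by blast
qed

lemma band:
  fixes v v' :: "real \<Rightarrow> real"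
  assumes d: "\<forall>t\<ge>0. (v has_real_derivative v' t) (at t within {0..})"
    and neg: "\<forall>t\<ge>0. c < v t \<and> v t < M \<longrightarrow> v' t \<le> 0"
    and v0: "v 0 \<le> c" and cM: "c < M"
  shows "\<forall>t\<ge>0. v t \<le> c"
proof (rule ccontr)
  assume "\<not> (\<forall>t\<ge>0. v t \<le> c)"
  then obtain t1 where t1: "t1 \<ge> 0" "v t1 > c" by auto
  define e where "e = min (v t1) ((c + M) / 2)"
  have e: "c < e" "e < M" "e \<le> v t1" using t1 cM by (auto simp: e_def min_def)
  have cont: "continuous_on {0..t1} v" by (rule deriv_cont[OF d]) auto
  define A where "A = {t \<in> {0..t1}. e \<le> v t}"
  have Acl: "closed A" unfolding A_def
    by (rule continuous_on_closed_Collect_le) (auto intro: cont continuous_on_const)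
  have Ane: "A \<noteq> {}" using t1 e by (auto simp: A_def)
  have Abdd: "bdd_below A" unfolding A_def by (rule bdd_belowI[of _ 0]) auto
  define u where "u = Inf A"
  have uA: "u \<in> A" unfolding u_def using closed_contains_Inf Acl Ane Abdd by blast
  have u_le: "\<And>t. t \<in> A \<Longrightarrow> u \<le> t" unfolding u_def using Abdd cInf_lower by blast
  have u: "0 \<le> u" "u \<le> t1" "e \<le> v u" using uA by (auto simp: A_def)
  have below: "\<And>t. 0 \<le> t \<Longrightarrow> t < u \<Longrightarrow> v t < e"
  proof -
    fix t assume "0 \<le> t" "t < u"
    then show "v t < e" using u_le[of t] u by (force simp: A_def)
  qed
  define B where "B = {t \<in> {0..u}. v t \<le> c}"
  have cont2: "continuous_on {0..u} v" by (rule deriv_cont[OF d]) auto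
  have Bcl: "closed B" unfolding B_def
    by (rule continuous_on_closed_Collect_le) (auto intro: cont2 continuous_on_const)
  have Bne: "B \<noteq> {}" using v0 u by (auto simp: B_def)
  have Bbdd: "bdd_above B" unfolding B_def by (rule bdd_aboveI[of _ u]) auto
  define s where "s = Sup B"
  have sB: "s \<in> B" unfolding s_def using closed_contains_Sup Bcl Bne Bbdd by blast
  have s_ge: "\<And>t. t \<in> B \<Longrightarrow> t \<le> s" unfolding s_def using Bbdd cSup_upper by blast
  have s: "0 \<le> s" "s \<le> u" "v s \<le> c" using sB by (auto simp: B_def)
  have su: "s < u" using s u e by (metis order.order_iff_strict not_le order_le_less_trans)
  have above: "\<And>t. s < t \<Longrightarrow> t \<le> u \<Longrightarrow> c < v t"
  proof -
    fix t assume "s < t" "t \<le> u"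
    then show "c < v t" using s_ge[of t] s by (force simp: B_def)
  qed
  have cont3: "continuous_on {s..u} v" by (rule deriv_cont[OF d]) (use s in auto)
  have "\<exists>l z. s < z \<and> z < u \<and> DERIV v z :> l \<and> v u - v s = (u - s) * l"
  proof (rule MVT[OF su cont3])
    fix z assume "s < z" "z < u"
    then have "DERIV v z :> v' z" using deriv_interior d s by auto
    then show "v differentiable (at z)" by (rule real_differentiable_def[THEN iffD2, OF exI])
  qed
  then obtain l z where z: "s < z" "z < u" "DERIV v z :> l" "v u - v s = (u - s) * l" by blast
  have "DERIV v z :> v' z" using deriv_interior d s z by auto
  then have "l = v' z" using z(3) DERIV_unique by blast
  moreover have "v' z \<le> 0" using neg above[of z] below[of z] z s e by auto
  ultimately have "(u - s) * l \<le> 0" using su by (simp add: mult_nonneg_nonpos)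
  then have "v u \<le> v s" using z(4) by linarith
  then show False using s u e by linarith
qed

lemma powr_facts:
  fixes V m :: real
  assumes "V > 0" "m > 0"
  shows "V powr (1/m - 1) * V powr (1 + 1/m) = (V powr (1/m))^2"
    and "V powr (1/m - 1) * V powr (1 - 1/m) = 1"
    and "V powr (1/m - 1) * V = V powr (1/m)"
proof -
  have "V powr (1/m - 1) * V powr (1 + 1/m) = V powr (1/m + 1/m)"
    using assms by (simp add: powr_add[symmetric])
  also have "\<dots> = (V powr (1/m))^2" by (simp only: power2_eq_square powr_add)
  finally show "V powr (1/m - 1) * V powr (1 + 1/m) = (V powr (1/m))^2" .
  show "V powr (1/m - 1) * V powr (1 - 1/m) = 1"
    using assms by (simp add: powr_add[symmetric])
  show "V powr (1/m - 1) * V = V powr (1/m)" using assms by (simp add: powr_diff)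
qed

lemma alg_eq: "(g::real) * (1/m) * (- a * w^2 - b * 1 + d * w) = - (g * (a * w^2 - d * w + b)) / m"
  by (simp add: field_simps)

lemma reach_v:
  fixes v v' G g :: "real \<Rightarrow> real" and ok :: "real \<Rightarrow> bool" and a b d \<mu> B :: real
  assumes dv: "\<forall>t\<ge>0. (v has_real_derivative v' t) (at t within {0..})"
    and vdot: "\<forall>t\<ge>0. v t > 0 \<longrightarrow> v' t \<le> - a * v t powr (1 + 1/\<mu>) - b * v t powr (1 - 1/\<mu>) + d * v t"
    and mu: "\<mu> > 0"
    and G: "\<forall>w. 0 < w \<and> ok w \<longrightarrow> (G has_real_derivative g w) (at w) \<and> 0 \<le> g w \<and>
              \<mu> \<le> g w * (a * w^2 - d * w + b) \<and> 0 < G w \<and> G w \<le> B"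
    and okv: "\<forall>t\<ge>0. v t > 0 \<longrightarrow> ok (v t powr (1/\<mu>))"
    and vnn: "\<forall>t\<ge>0. v t \<ge> 0" and B0: "0 \<le> B"
  shows "\<exists>t. 0 \<le> t \<and> t \<le> B \<and> v t = 0"
proof (rule ccontr)
  assume "\<not> (\<exists>t. 0 \<le> t \<and> t \<le> B \<and> v t = 0)"
  then have pos: "\<And>t. 0 \<le> t \<Longrightarrow> t \<le> B \<Longrightarrow> v t > 0" using vnn
    by (metis order.not_eq_order_implies_strict)
  define h where "h t = t + G (v t powr (1/\<mu>))" for t
  define h' where "h' t = 1 + g (v t powr (1/\<mu>)) * ((1/\<mu>) * v t powr (1/\<mu> - 1) * v' t)" for t
  have hd: "(h has_real_derivative h' t) (at t within {0..})" and hn: "h' t \<le> 0"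
    if t: "0 \<le> t" "t \<le> B" for t
  proof -
    have vt: "v t > 0" using pos t by auto
    define w where "w = v t powr (1/\<mu>)"
    have w: "0 < w" "ok w" using vt okv t by (auto simp: w_def)
    have Gw: "(G has_real_derivative g w) (at w)" "0 \<le> g w" "\<mu> \<le> g w * (a * w^2 - d * w + b)"
      using G w by auto
    have p: "((\<lambda>t. v t powr (1/\<mu>)) has_real_derivative ((1/\<mu>) * v t powr (1/\<mu> - 1)) * v' t) (at t within {0..})"
      by (rule DERIV_chain2[of "\<lambda>z. z powr (1/\<mu>)" _ v, OF has_real_derivative_powr[OF vt]]) (use dv t in auto)
    have "((\<lambda>t. G (v t powr (1/\<mu>))) has_real_derivative g w * ((1/\<mu>) * v t powr (1/\<mu> - 1) * v' t)) (at t within {0..})"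
      by (rule DERIV_chain2[of G, OF _ p]) (use Gw(1) w_def in simp)
    then have "(h has_real_derivative 1 + g w * ((1/\<mu>) * v t powr (1/\<mu> - 1) * v' t)) (at t within {0..})"
      unfolding h_def[abs_def] by (intro DERIV_add DERIV_ident)
    then show "(h has_real_derivative h' t) (at t within {0..})" by (simp add: h'_def w_def)
    define P where "P = g w * (1/\<mu>) * v t powr (1/\<mu> - 1)"
    have P0: "P \<ge> 0" using Gw mu by (simp add: P_def)
    have "h' t = 1 + P * v' t" by (simp add: h'_def P_def w_def)
    also have "\<dots> \<le> 1 + P * (- a * v t powr (1 + 1/\<mu>) - b * v t powr (1 - 1/\<mu>) + d * v t)"
      using vdot t vt P0 by (simp add: mult_left_mono)
    also have "P * (- a * v t powr (1 + 1/\<mu>) - b * v t powr (1 - 1/\<mu>) + d * v t)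
       = g w * (1/\<mu>) * (- a * (v t powr (1/\<mu> - 1) * v t powr (1 + 1/\<mu>))
           - b * (v t powr (1/\<mu> - 1) * v t powr (1 - 1/\<mu>)) + d * (v t powr (1/\<mu> - 1) * v t))"
      by (simp add: P_def algebra_simps)
    also have "\<dots> = - (g w * (a * w^2 - d * w + b)) / \<mu>"
      unfolding powr_facts[OF vt mu] w_def[symmetric] by (rule alg_eq)
    finally have "h' t \<le> 1 - (g w * (a * w^2 - d * w + b)) / \<mu>" by simp
    also have "\<dots> \<le> 0" using Gw(3) mu by (simp add: field_simps)
    finally show "h' t \<le> 0" .
  qed
  have v0: "v 0 > 0" using pos[of 0] B0 by simp
  have G0: "0 < G (v 0 powr (1/\<mu>))" "G (v 0 powr (1/\<mu>)) \<le> B" using G okv v0 by auto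
  then have Bpos: "B > 0" by linarith
  have vB: "v B > 0" using pos Bpos by auto
  have GB: "0 < G (v B powr (1/\<mu>))" using G okv vB Bpos by auto
  have cont: "continuous_on {0..B} h"
    unfolding continuous_on_eq_continuous_within
  proof
    fix t assume "t \<in> {0..B}"
    then have "continuous (at t within {0..}) h" using hd[of t] DERIV_continuous[of h "h' t" t "{0..}"] by auto
    then show "continuous (at t within {0..B}) h" by (rule continuous_within_subset) auto
  qed
  have "\<exists>l z. 0 < z \<and> z < B \<and> DERIV h z :> l \<and> h B - h 0 = (B - 0) * l"
  proof (rule MVT[OF Bpos cont])
    fix z assume "0 < z" "z < B"
    then have "DERIV h z :> h' z" using deriv_interior hd by auto
    then show "h differentiable (at z)" by (rule real_differentiable_def[THEN iffD2, OF exI])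
  qed
  then obtain l z where z: "0 < z" "z < B" "DERIV h z :> l" "h B - h 0 = (B - 0) * l" by blast
  have "DERIV h z :> h' z" using deriv_interior hd z by auto
  then have "l = h' z" using z(3) DERIV_unique by blast
  then have "l \<le> 0" using hn z by auto
  then have "B * l \<le> 0" using Bpos by (simp add: mult_nonneg_nonpos)
  then have "h B \<le> h 0" using z(4) by simp
  then show False using G0 GB by (simp add: h_def)
qed



lemma G_A1:
  fixes a b d \<mu> :: real
  assumes a: "a > 0" and b: "b > 0" and mu: "\<mu> > 0" and d: "d \<le> 0"
  defines "s \<equiv> sqrt (a * b)"
  shows "\<forall>w. 0 < w \<and> True \<longrightarrow> ((\<lambda>w. \<mu> / s * arctan (a * w / s)) has_real_derivative (\<mu> / (b + a * w^2))) (at w)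
      \<and> 0 \<le> \<mu> / (b + a * w^2) \<and> \<mu> \<le> \<mu> / (b + a * w^2) * (a * w^2 - d * w + b)
      \<and> 0 < \<mu> / s * arctan (a * w / s) \<and> \<mu> / s * arctan (a * w / s) \<le> \<mu> * pi / (2 * s)"
proof (intro allI impI conjI)
  fix w :: real assume w: "0 < w \<and> True"
  have s: "s > 0" using a b by (simp add: s_def)
  have s2: "s * s = a * b" using a b by (simp add: s_def)
  have P: "b + a * w^2 > 0" using a b by (simp add: add_pos_nonneg)
  have "((\<lambda>w. \<mu> / s * arctan (a * w / s)) has_real_derivative \<mu> / s * (inverse (1 + (a * w / s)^2) * (a / s))) (at w)"
    using s by (auto intro!: derivative_eq_intros)
  moreover have "\<mu> / s * (inverse (1 + (a * w / s)^2) * (a / s)) = \<mu> / (b + a * w^2)"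
  proof -
    have "\<mu> / s * (inverse (1 + (a * w / s)^2) * (a / s)) = \<mu> * a / (s * s + a * a * w^2)"
      using s by (simp add: field_simps power2_eq_square)
    also have "\<dots> = \<mu> * a / (a * (b + a * w^2))" by (simp add: s2 algebra_simps power2_eq_square)
    also have "\<dots> = \<mu> / (b + a * w^2)" using a by simp
    finally show ?thesis .
  qed
  ultimately show "((\<lambda>w. \<mu> / s * arctan (a * w / s)) has_real_derivative (\<mu> / (b + a * w^2))) (at w)" by simp
  show "0 \<le> \<mu> / (b + a * w^2)" using P mu by simp
  have "b + a * w^2 \<le> a * w^2 - d * w + b" using d w by (simp add: mult_nonpos_nonneg)
  then have "1 \<le> (a * w^2 - d * w + b) / (b + a * w^2)" using P by simp
  then have "\<mu> * 1 \<le> \<mu> * ((a * w^2 - d * w + b) / (b + a * w^2))" using mu by (intro mult_left_mono) auto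
  then show "\<mu> \<le> \<mu> / (b + a * w^2) * (a * w^2 - d * w + b)" by simp
  have "0 < arctan (a * w / s)" using a s w by simp
  then show "0 < \<mu> / s * arctan (a * w / s)" using mu s by simp
  have "arctan (a * w / s) \<le> pi / 2" using arctan_ubound less_imp_le by blast
  then have "\<mu> / s * arctan (a * w / s) \<le> \<mu> / s * (pi / 2)" using mu s by (intro mult_left_mono) auto
  then show "\<mu> / s * arctan (a * w / s) \<le> \<mu> * pi / (2 * s)" by simp
qed

lemma G_A2:
  fixes a b d \<mu> :: real
  assumes a: "a > 0" and b: "b > 0" and mu: "\<mu> > 0" and d: "d\<^sup>2 < 4 * a * b"
  defines "e \<equiv> sqrt (4 * a * b - d\<^sup>2)"
  shows "\<forall>w. 0 < w \<and> True \<longrightarrow> ((\<lambda>w. 2 * \<mu> / e * (arctan ((2 * a * w - d) / e) - arctan (- d / e))) has_real_derivative (\<mu> / (a * w^2 - d * w + b))) (at w)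
      \<and> 0 \<le> \<mu> / (a * w^2 - d * w + b) \<and> \<mu> \<le> \<mu> / (a * w^2 - d * w + b) * (a * w^2 - d * w + b)
      \<and> 0 < 2 * \<mu> / e * (arctan ((2 * a * w - d) / e) - arctan (- d / e))
      \<and> 2 * \<mu> / e * (arctan ((2 * a * w - d) / e) - arctan (- d / e)) \<le> 2 * \<mu> / e * (pi / 2 - arctan (- d / e))"
proof (intro allI impI conjI)
  fix w :: real assume w: "0 < w \<and> True"
  have e: "e > 0" using d by (simp add: e_def)
  have e2: "e * e = 4 * a * b - d\<^sup>2" using d by (simp add: e_def)
  have q4: "4 * a * (a * w^2 - d * w + b) = e * e + (2 * a * w - d)^2"
    by (simp add: e2 algebra_simps power2_eq_square)
  have qpos: "a * w^2 - d * w + b > 0"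
  proof -
    have "e * e + (2 * a * w - d)^2 > 0" using e by (simp add: add_pos_nonneg)
    then have "4 * a * (a * w^2 - d * w + b) > 0" using q4 by simp
    then show ?thesis using a by (simp add: zero_less_mult_iff)
  qed
  have "((\<lambda>w. 2 * \<mu> / e * (arctan ((2 * a * w - d) / e) - arctan (- d / e))) has_real_derivative
      2 * \<mu> / e * (inverse (1 + ((2 * a * w - d) / e)^2) * ((2 * a) / e) - 0)) (at w)"
    using e by (auto intro!: derivative_eq_intros)
  moreover have "2 * \<mu> / e * (inverse (1 + ((2 * a * w - d) / e)^2) * ((2 * a) / e) - 0) = \<mu> / (a * w^2 - d * w + b)"
  proof -
    have "2 * \<mu> / e * (inverse (1 + ((2 * a * w - d) / e)^2) * ((2 * a) / e) - 0)
        = 4 * a * \<mu> / (e * e + (2 * a * w - d)^2)"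
      using e by (simp add: field_simps power2_eq_square)
    also have "\<dots> = 4 * a * \<mu> / (4 * a * (a * w^2 - d * w + b))" by (simp add: q4)
    also have "\<dots> = \<mu> / (a * w^2 - d * w + b)" using a by simp
    finally show ?thesis .
  qed
  ultimately show "((\<lambda>w. 2 * \<mu> / e * (arctan ((2 * a * w - d) / e) - arctan (- d / e))) has_real_derivative (\<mu> / (a * w^2 - d * w + b))) (at w)" by simp
  show "0 \<le> \<mu> / (a * w^2 - d * w + b)" using qpos mu by simp
  show "\<mu> \<le> \<mu> / (a * w^2 - d * w + b) * (a * w^2 - d * w + b)" using qpos by simp
  have "- d < 2 * a * w - d" using a w by simp
  then have "- d / e < (2 * a * w - d) / e" using e by (simp only: divide_strict_right_mono)
  then have "arctan (- d / e) < arctan ((2 * a * w - d) / e)" by (rule arctan_monotone)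
  then show "0 < 2 * \<mu> / e * (arctan ((2 * a * w - d) / e) - arctan (- d / e))" using mu e by simp
  have "arctan ((2 * a * w - d) / e) \<le> pi / 2" using arctan_ubound less_imp_le by blast
  then show "2 * \<mu> / e * (arctan ((2 * a * w - d) / e) - arctan (- d / e)) \<le> 2 * \<mu> / e * (pi / 2 - arctan (- d / e))"
    using mu e by (intro mult_left_mono) auto
qed

lemma B_facts:
  fixes a b d :: real
  assumes a: "a > 0" and b: "b > 0" and d: "2 * sqrt (a * b) \<le> d"
  defines "s \<equiv> sqrt (a * b)"
  defines "wm \<equiv> (d - sqrt (d\<^sup>2 - 4 * a * b)) / (2 * a)"
  shows "wm > 0" "wm * (d - a * wm) = b" "a * wm \<le> s" "s > 0"
    "\<And>w. 0 < w \<Longrightarrow> w < wm \<Longrightarrow> a * w^2 - d * w + b = (wm - w) * (d - a * w - a * wm)"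
    "\<And>w. 0 < w \<Longrightarrow> w < wm \<Longrightarrow> d - a * w - a * wm > 0"
proof -
  define e where "e = sqrt (d\<^sup>2 - 4 * a * b)"
  show s: "s > 0" using a b by (simp add: s_def)
  have s2: "s * s = a * b" using a b by (simp add: s_def)
  have d0: "d > 0" using d s s_def by linarith
  have "(2 * s)^2 \<le> d^2" using d s s_def by (intro power_mono) auto
  moreover have "(2 * s)^2 = 4 * a * b" using s2 by (simp add: power2_eq_square)
  ultimately have disc: "d\<^sup>2 - 4 * a * b \<ge> 0" by linarith
  have e0: "e \<ge> 0" using disc by (simp add: e_def)
  have e2: "e * e = d\<^sup>2 - 4 * a * b" using disc by (simp add: e_def)
  have "e < d"
  proof -
    have "e < sqrt (d\<^sup>2)" unfolding e_def using a b by (intro real_sqrt_less_mono) simp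
    then show ?thesis using d0 by simp
  qed
  then show wm: "wm > 0" using a by (simp add: wm_def e_def[symmetric])
  have "a * wm = (d - e) / 2" using a by (simp add: wm_def e_def)
  moreover have "d - a * wm = (d + e) / 2" using \<open>a * wm = (d - e) / 2\<close> by simp
  ultimately have "a * wm * (d - a * wm) = ((d - e) / 2) * ((d + e) / 2)" by (metis)
  also have "\<dots> = (d * d - e * e) / 4" by (simp add: algebra_simps)
  finally have "a * wm * (d - a * wm) = (d * d - e * e) / 4" .
  also have "\<dots> = a * b" using e2 by (simp add: power2_eq_square)
  finally have key: "a * (wm * (d - a * wm)) = a * b" by simp
  then show key2: "wm * (d - a * wm) = b" using a by simp
  have "(d - 2 * s)^2 \<le> d\<^sup>2 - 4 * a * b"
  proof -
    have "(d - 2 * s)^2 = d^2 - 4 * d * s + 4 * (s * s)" by (simp add: power2_eq_square algebra_simps)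
    also have "\<dots> \<le> d\<^sup>2 - 4 * a * b"
    proof -
      have "2 * s * s \<le> d * s" using d s s_def by (intro mult_right_mono) auto
      then show ?thesis using s2 by (simp add: algebra_simps)
    qed
    finally show ?thesis .
  qed
  then have "d - 2 * s \<le> e" unfolding e_def by (rule real_le_rsqrt)
  then show "a * wm \<le> s" using \<open>a * wm = (d - e) / 2\<close> by simp
  fix w :: real assume w: "0 < w" "w < wm"
  show "a * w^2 - d * w + b = (wm - w) * (d - a * w - a * wm)"
    using key2 by (simp add: algebra_simps power2_eq_square)
  have "a * w < a * wm" using a w by simp
  then show "d - a * w - a * wm > 0" using \<open>a * wm = (d - e) / 2\<close> e0 by simp
qed

lemma cancel_aux:
  fixes D s \<mu> wm Y :: real
  assumes "D \<noteq> 0" "s \<noteq> 0"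
  shows "\<mu> * wm / (s * D^2) * (D * Y) = \<mu> * (wm * Y) / (s * D)"
  using assms by (simp add: field_simps power2_eq_square)

lemma G_B:
  fixes a b d \<mu> k :: real
  assumes a: "a > 0" and b: "b > 0" and mu: "\<mu> > 0" and d: "2 * sqrt (a * b) \<le> d" and k: "0 < k" "k < 1"
  defines "s \<equiv> sqrt (a * b)"
  defines "wm \<equiv> (d - sqrt (d\<^sup>2 - 4 * a * b)) / (2 * a)"
  shows "\<forall>w. 0 < w \<and> w \<le> k * wm \<longrightarrow> ((\<lambda>w. \<mu> * w / (s * (wm - w))) has_real_derivative (\<mu> * wm / (s * (wm - w)^2))) (at w)
      \<and> 0 \<le> \<mu> * wm / (s * (wm - w)^2) \<and> \<mu> \<le> \<mu> * wm / (s * (wm - w)^2) * (a * w^2 - d * w + b)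
      \<and> 0 < \<mu> * w / (s * (wm - w)) \<and> \<mu> * w / (s * (wm - w)) \<le> \<mu> * k / ((1 - k) * s)"
proof (intro allI impI conjI)
  note F = B_facts[OF a b d, folded s_def wm_def]
  fix w :: real assume w: "0 < w \<and> w \<le> k * wm"
  have wm: "wm > 0" by (rule F(1))
  have s: "s > 0" by (rule F(4))
  have kw: "k * wm < wm" using k wm by simp
  have ww: "w < wm" using w kw by linarith
  have D0: "wm - w > 0" using ww by simp
  have "((\<lambda>w. \<mu> * w / (s * (wm - w))) has_real_derivative
     ((\<mu> * 1) * (s * (wm - w)) - \<mu> * w * (s * (0 - 1))) / (s * (wm - w) * (s * (wm - w)))) (at w)"
    using s D0 by (auto intro!: derivative_eq_intros)
  moreover have "((\<mu> * 1) * (s * (wm - w)) - \<mu> * w * (s * (0 - 1))) / (s * (wm - w) * (s * (wm - w)))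
      = \<mu> * wm / (s * (wm - w)^2)"
  proof -
    have "(\<mu> * 1) * (s * (wm - w)) - \<mu> * w * (s * (0 - 1)) = s * (\<mu> * wm)" by (simp add: algebra_simps)
    moreover have "s * (\<mu> * wm) / (s * ((wm - w) * (s * (wm - w)))) = \<mu> * wm / ((wm - w) * (s * (wm - w)))"
      using s by (intro mult_divide_mult_cancel_left) simp
    ultimately show ?thesis by (simp add: power2_eq_square mult.commute mult.left_commute)
  qed
  ultimately show "((\<lambda>w. \<mu> * w / (s * (wm - w))) has_real_derivative (\<mu> * wm / (s * (wm - w)^2))) (at w)" by simp
  show "0 \<le> \<mu> * wm / (s * (wm - w)^2)" using mu wm s by simp
  have X: "wm * (d - a * w - a * wm) \<ge> s * (wm - w)"
  proof -
    have "a * (wm * (d - a * w - a * wm) - s * (wm - w)) = (s - a * wm) * (s + a * w)"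
    proof -
      have "a * (wm * (d - a * w - a * wm) - s * (wm - w)) = a * (wm * (d - a * wm)) - a * a * w * wm - a * s * wm + a * s * w"
        by (simp add: algebra_simps)
      also have "\<dots> = a * b - a * a * w * wm - a * s * wm + a * s * w" using F(2) by simp
      also have "\<dots> = (s - a * wm) * (s + a * w)"
        using a b by (simp add: s_def algebra_simps)
      finally show ?thesis .
    qed
    moreover have "(s - a * wm) * (s + a * w) \<ge> 0" using F(3) s a w by simp
    ultimately have "a * (wm * (d - a * w - a * wm) - s * (wm - w)) \<ge> 0" by simp
    then show ?thesis using a by (simp add: zero_le_mult_iff)
  qed
  have "\<mu> * wm / (s * (wm - w)^2) * (a * w^2 - d * w + b)
      = \<mu> * (wm * (d - a * w - a * wm)) / (s * (wm - w))"
    unfolding F(5)[of w, OF conjunct1[OF w] ww] using D0 s by (rule cancel_aux[OF less_imp_neq[symmetric] less_imp_neq[symmetric]])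
  moreover have "\<mu> \<le> \<mu> * (wm * (d - a * w - a * wm)) / (s * (wm - w))"
  proof -
    have "1 \<le> (wm * (d - a * w - a * wm)) / (s * (wm - w))" using X s D0 by simp
    then have "\<mu> * 1 \<le> \<mu> * ((wm * (d - a * w - a * wm)) / (s * (wm - w)))" using mu by (intro mult_left_mono) auto
    then show ?thesis by simp
  qed
  ultimately show "\<mu> \<le> \<mu> * wm / (s * (wm - w)^2) * (a * w^2 - d * w + b)" by simp
  show "0 < \<mu> * w / (s * (wm - w))" using mu w s D0 by simp
  have "w * (1 - k) \<le> k * (wm - w)" using w by (simp add: algebra_simps)
  then have "w / (wm - w) \<le> k / (1 - k)" using D0 k by (simp add: field_simps)
  then have "\<mu> / s * (w / (wm - w)) \<le> \<mu> / s * (k / (1 - k))" using mu s by (intro mult_left_mono) auto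
  then show "\<mu> * w / (s * (wm - w)) \<le> \<mu> * k / ((1 - k) * s)" by (simp add: field_simps)
qed


lemma Vx_deriv:
  fixes f :: "real^'n \<Rightarrow> real^'n" and V :: "real^'n \<Rightarrow> real"
    and DV :: "(real^'n) \<Rightarrow> ((real^'n) \<Rightarrow>\<^sub>L real)"
  assumes sol: "is_solution f x0 x" and Vd: "\<forall>x. (V has_derivative blinfun_apply (DV x)) (at x)" and t: "t \<ge> 0"
  shows "((\<lambda>t. V (x t)) has_real_derivative DV (x t) (f (x t))) (at t within {0..})"
proof -
  have "(x has_derivative (\<lambda>h. h *\<^sub>R f (x t))) (at t within {0..})"
    using sol t unfolding is_solution_def has_vector_derivative_def by auto
  from has_derivative_compose[OF this Vd[rule_format]]
  have "((\<lambda>t. V (x t)) has_derivative (\<lambda>h. DV (x t) (h *\<^sub>R f (x t)))) (at t within {0..})" .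
  moreover have "(\<lambda>h. DV (x t) (h *\<^sub>R f (x t))) = (\<lambda>h. DV (x t) (f (x t)) * h)"
    by (auto simp: blinfun.scaleR_right)
  ultimately show ?thesis unfolding has_field_derivative_def by simp
qed

lemma expr_eq:
  fixes a b d \<mu> :: real
  assumes a: "a > 0" and d: "d\<^sup>2 < 4 * a * b"
  shows "\<mu> / (a * sqrt ((4 * a * b - d\<^sup>2) / (4 * a\<^sup>2))) * (pi / 2 - arctan (- d / sqrt (4 * a * b - d\<^sup>2)))
    = 2 * \<mu> / sqrt (4 * a * b - d\<^sup>2) * (pi / 2 - arctan (- d / sqrt (4 * a * b - d\<^sup>2)))"
proof -
  define e where "e = sqrt (4 * a * b - d\<^sup>2)"
  have e: "e > 0" using d by (simp add: e_def)
  have e2: "e\<^sup>2 = 4 * a * b - d\<^sup>2" using d by (simp add: e_def)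
  have "sqrt ((4 * a * b - d\<^sup>2) / (4 * a\<^sup>2)) = e / (2 * a)"
    by (rule real_sqrt_unique) (use a e e2 in \<open>auto simp: power_divide\<close>)
  then have hA: "a * sqrt ((4 * a * b - d\<^sup>2) / (4 * a\<^sup>2)) = e / 2" using a by simp
  show ?thesis unfolding e_def[symmetric] hA by simp
qed


theorem theorem1:
  fixes f :: "real^'n \<Rightarrow> real^'n"
    and V :: "real^'n \<Rightarrow> real"
    and DV :: "(real^'n) \<Rightarrow> ((real^'n) \<Rightarrow>\<^sub>L real)"
    and \<alpha>1 \<alpha>2 \<delta>1 \<mu> k :: real
    and D :: "(real^'n) set"
  assumes f_cont: "continuous_on UNIV f"
    and f0: "f 0 = 0"
    and sol_ex: "\<forall>x0. \<exists>x. is_solution f x0 x"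
    and sol_uniq: "\<forall>x0 x y. is_solution f x0 x \<and> is_solution f x0 y \<longrightarrow> (\<forall>t\<ge>0. x t = y t)"
    and V_deriv: "\<forall>x. (V has_derivative blinfun_apply (DV x)) (at x)"
    and DV_cont: "continuous_on UNIV DV"
    and V_posdef: "V 0 = 0" "\<forall>x. x \<noteq> 0 \<longrightarrow> V x > 0"
    and V_proper: "\<forall>c. compact {x. V x \<le> c}"
    and \<alpha>_pos: "\<alpha>1 > 0" "\<alpha>2 > 0"
    and \<mu>_gt: "\<mu> > 1"
    and V_dot: "\<forall>x. x \<noteq> 0 \<longrightarrow>
        blinfun_apply (DV x) (f x) \<le> - \<alpha>1 * V x powr (1 + 1/\<mu>) - \<alpha>2 * V x powr (1 - 1/\<mu>) + \<delta>1 * V x"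
    and k_bounds: "0 < k" "k < 1"
    and D_def: "D = (if \<delta>1 / (2 * sqrt (\<alpha>1 * \<alpha>2)) < 1 then UNIV
        else {x. V x \<le> k powr \<mu> * ((\<delta>1 - sqrt (\<delta>1\<^sup>2 - 4 * \<alpha>1 * \<alpha>2)) / (2 * \<alpha>1)) powr \<mu>})"
  shows "0 \<in> interior D \<and>
    (\<forall>x0\<in>D. \<forall>x. is_solution f x0 x \<longrightarrow> (\<forall>t\<ge>0. x t \<in> D)) \<and>
    (\<exists>T. (\<forall>x0\<in>D. \<forall>x. is_solution f x0 x \<longrightarrow> (\<exists>t. 0 \<le> t \<and> t \<le> T \<and> x t = 0)) \<and>
      (\<delta>1 / (2 * sqrt (\<alpha>1 * \<alpha>2)) \<le> 0 \<longrightarrow> T \<le> \<mu> * pi / (2 * sqrt (\<alpha>1 * \<alpha>2))) \<and>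
      (0 \<le> \<delta>1 / (2 * sqrt (\<alpha>1 * \<alpha>2)) \<and> \<delta>1 / (2 * sqrt (\<alpha>1 * \<alpha>2)) < 1 \<longrightarrow>
         T \<le> \<mu> / (\<alpha>1 * sqrt ((4 * \<alpha>1 * \<alpha>2 - \<delta>1\<^sup>2) / (4 * \<alpha>1\<^sup>2)))
               * (pi / 2 - arctan (- \<delta>1 / sqrt (4 * \<alpha>1 * \<alpha>2 - \<delta>1\<^sup>2)))) \<and>
      (1 \<le> \<delta>1 / (2 * sqrt (\<alpha>1 * \<alpha>2)) \<longrightarrow> T \<le> \<mu> * k / ((1 - k) * sqrt (\<alpha>1 * \<alpha>2))))"
proof -
  define s where "s = sqrt (\<alpha>1 * \<alpha>2)"
  have s: "s > 0" using \<alpha>_pos by (simp add: s_def)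
  have s2: "s * s = \<alpha>1 * \<alpha>2" using \<alpha>_pos by (simp add: s_def)
  have mu0: "\<mu> > 0" using \<mu>_gt by simp
  have Vnn: "\<And>x. V x \<ge> 0" using V_posdef by (metis less_imp_le order_refl)
  have Vpos_iff: "\<And>x. V x > 0 \<longleftrightarrow> x \<noteq> 0" using V_posdef by auto
  have Vcont: "continuous_on UNIV V"
    by (intro continuous_at_imp_continuous_on ballI has_derivative_continuous) (use V_deriv in blast)
  have vd: "\<And>x0 x. is_solution f x0 x \<Longrightarrow>
      \<forall>t\<ge>0. ((\<lambda>t. V (x t)) has_real_derivative DV (x t) (f (x t))) (at t within {0..})"
    using Vx_deriv V_deriv by blast
  have vdot: "\<And>x. \<forall>t\<ge>0. V (x t) > 0 \<longrightarrow> DV (x t) (f (x t)) \<le>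
      - \<alpha>1 * V (x t) powr (1 + 1/\<mu>) - \<alpha>2 * V (x t) powr (1 - 1/\<mu>) + \<delta>1 * V (x t)"
    using V_dot Vpos_iff by blast
  have reach: "\<exists>t. 0 \<le> t \<and> t \<le> B \<and> x t = 0"
    if sol: "is_solution f x0 x"
      and G: "\<forall>w. 0 < w \<and> ok w \<longrightarrow> (G has_real_derivative g w) (at w) \<and> 0 \<le> g w \<and>
              \<mu> \<le> g w * (\<alpha>1 * w^2 - \<delta>1 * w + \<alpha>2) \<and> 0 < G w \<and> G w \<le> B"
      and okv: "\<forall>t\<ge>0. V (x t) > 0 \<longrightarrow> ok (V (x t) powr (1/\<mu>))"
      and B0: "0 \<le> B"
    for x0 x B G g ok
  proof -
    have "\<exists>t. 0 \<le> t \<and> t \<le> B \<and> V (x t) = 0"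
      by (rule reach_v[of "\<lambda>t. V (x t)" "\<lambda>t. DV (x t) (f (x t))" \<alpha>1 \<mu> \<alpha>2 \<delta>1 ok G g B])
         (use vd[OF sol] vdot mu0 G okv Vnn B0 in auto)
    then show ?thesis using Vpos_iff by (metis less_irrefl)
  qed
  show ?thesis
  proof (cases "\<delta>1 / (2 * s) < 1")
    case True
    have DU: "D = UNIV" using D_def True by (simp add: s_def)
    have T: "\<exists>T. (\<forall>x0\<in>D. \<forall>x. is_solution f x0 x \<longrightarrow> (\<exists>t. 0 \<le> t \<and> t \<le> T \<and> x t = 0)) \<and>
      (\<delta>1 / (2 * s) \<le> 0 \<longrightarrow> T \<le> \<mu> * pi / (2 * s)) \<and>
      (0 \<le> \<delta>1 / (2 * s) \<and> \<delta>1 / (2 * s) < 1 \<longrightarrow>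
         T \<le> \<mu> / (\<alpha>1 * sqrt ((4 * \<alpha>1 * \<alpha>2 - \<delta>1\<^sup>2) / (4 * \<alpha>1\<^sup>2)))
               * (pi / 2 - arctan (- \<delta>1 / sqrt (4 * \<alpha>1 * \<alpha>2 - \<delta>1\<^sup>2)))) \<and>
      (1 \<le> \<delta>1 / (2 * s) \<longrightarrow> T \<le> \<mu> * k / ((1 - k) * s))"
    proof (cases "\<delta>1 \<le> 0")
      case True
      note GA = G_A1[OF \<alpha>_pos mu0 True, folded s_def]
      have T0: "0 \<le> \<mu> * pi / (2 * s)" using mu0 s by simp
      show ?thesis
      proof (rule exI[of _ "\<mu> * pi / (2 * s)"], intro conjI impI ballI allI)
        fix x0 x assume "x0 \<in> D" "is_solution f x0 x"
        then show "\<exists>t. 0 \<le> t \<and> t \<le> \<mu> * pi / (2 * s) \<and> x t = 0"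
          using reach[OF _ GA _ T0] by simp
      next
        assume r: "0 \<le> \<delta>1 / (2 * s) \<and> \<delta>1 / (2 * s) < 1"
        then have d0: "\<delta>1 = 0" using True s by (simp add: zero_le_divide_iff)
        have "4 * \<alpha>1 * \<alpha>2 = (2 * s)^2" using s2 by (simp add: power2_eq_square)
        then have sq: "sqrt (4 * \<alpha>1 * \<alpha>2) = 2 * s" using s by (simp only: real_sqrt_abs)
        have dd0: "\<delta>1\<^sup>2 < 4 * \<alpha>1 * \<alpha>2" using \<alpha>_pos d0 by simp
        note E = expr_eq[OF \<alpha>_pos(1) dd0, of \<mu>]
        have E2: "2 * \<mu> / sqrt (4 * \<alpha>1 * \<alpha>2 - \<delta>1\<^sup>2) * (pi / 2 - arctan (- \<delta>1 / sqrt (4 * \<alpha>1 * \<alpha>2 - \<delta>1\<^sup>2)))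
            = \<mu> * pi / (2 * s)" using d0 sq s by simp
        show "\<mu> * pi / (2 * s) \<le> \<mu> / (\<alpha>1 * sqrt ((4 * \<alpha>1 * \<alpha>2 - \<delta>1\<^sup>2) / (4 * \<alpha>1\<^sup>2)))
               * (pi / 2 - arctan (- \<delta>1 / sqrt (4 * \<alpha>1 * \<alpha>2 - \<delta>1\<^sup>2)))"
          using E E2 by linarith
      next
        assume "1 \<le> \<delta>1 / (2 * s)"
        then show "\<mu> * pi / (2 * s) \<le> \<mu> * k / ((1 - k) * s)" using True s
          by (simp add: le_divide_eq)
      qed simp
    next
      case False
      then have d0: "\<delta>1 > 0" by simp
      have "\<delta>1 < 2 * s" using \<open>\<delta>1 / (2 * s) < 1\<close> s by (simp add: divide_less_eq)
      then have "\<delta>1 * \<delta>1 < (2 * s) * (2 * s)" using d0 by (intro mult_strict_mono) auto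
      then have dd: "\<delta>1\<^sup>2 < 4 * \<alpha>1 * \<alpha>2" using s2 by (simp add: power2_eq_square)
      define e where "e = sqrt (4 * \<alpha>1 * \<alpha>2 - \<delta>1\<^sup>2)"
      note GA = G_A2[OF \<alpha>_pos mu0 dd, folded e_def]
      have e: "e > 0" using dd by (simp add: e_def)
      have T0: "0 \<le> 2 * \<mu> / e * (pi / 2 - arctan (- \<delta>1 / e))"
        using mu0 e arctan_ubound[of "- \<delta>1 / e"] by simp
      have EQ: "\<mu> / (\<alpha>1 * sqrt ((4 * \<alpha>1 * \<alpha>2 - \<delta>1\<^sup>2) / (4 * \<alpha>1\<^sup>2)))
               * (pi / 2 - arctan (- \<delta>1 / sqrt (4 * \<alpha>1 * \<alpha>2 - \<delta>1\<^sup>2)))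
          = 2 * \<mu> / e * (pi / 2 - arctan (- \<delta>1 / e))"
        using expr_eq[OF \<alpha>_pos(1) dd, of \<mu>] by (simp add: e_def)
      show ?thesis
      proof (rule exI[of _ "2 * \<mu> / e * (pi / 2 - arctan (- \<delta>1 / e))"], intro conjI impI ballI allI)
        fix x0 x assume "x0 \<in> D" "is_solution f x0 x"
        then show "\<exists>t. 0 \<le> t \<and> t \<le> 2 * \<mu> / e * (pi / 2 - arctan (- \<delta>1 / e)) \<and> x t = 0"
          using reach[OF _ GA _ T0] by simp
      next
        assume "\<delta>1 / (2 * s) \<le> 0"
        then show "2 * \<mu> / e * (pi / 2 - arctan (- \<delta>1 / e)) \<le> \<mu> * pi / (2 * s)"
          using d0 s by (simp add: divide_le_0_iff)
      next
        assume "1 \<le> \<delta>1 / (2 * s)"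
        then show "2 * \<mu> / e * (pi / 2 - arctan (- \<delta>1 / e)) \<le> \<mu> * k / ((1 - k) * s)"
          using \<open>\<delta>1 / (2 * s) < 1\<close> by simp
      qed (use EQ in simp)
    qed
    show ?thesis unfolding s_def[symmetric] using T DU by simp
  next
    case False
    then have r1: "1 \<le> \<delta>1 / (2 * s)" by simp
    then have d2: "2 * sqrt (\<alpha>1 * \<alpha>2) \<le> \<delta>1" using s by (simp add: le_divide_eq s_def)
    define wm where "wm = (\<delta>1 - sqrt (\<delta>1\<^sup>2 - 4 * \<alpha>1 * \<alpha>2)) / (2 * \<alpha>1)"
    note F = B_facts[OF \<alpha>_pos d2, folded s_def wm_def]
    have wm: "wm > 0" by (rule F(1))
    define c where "c = k powr \<mu> * wm powr \<mu>"
    have DD: "D = {x. V x \<le> c}" using D_def False by (simp add: s_def c_def wm_def)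
    have c_eq: "c = (k * wm) powr \<mu>" using k_bounds wm by (simp add: c_def powr_mult)
    have c0: "c > 0" using k_bounds wm by (simp add: c_eq)
    have c_root: "c powr (1/\<mu>) = k * wm"
      using c_eq mu0 k_bounds wm by (simp add: powr_powr)
    have kmu: "k powr \<mu> < 1"
      using powr_less_mono2[OF mu0 _ k_bounds(2)] k_bounds by simp
    have cM: "c < wm powr \<mu>" using kmu wm by (simp add: c_def)
    have inv: "\<forall>t\<ge>0. V (x t) \<le> c" if sol: "is_solution f x0 x" and x0: "V x0 \<le> c" for x0 x
    proof (rule band[OF vd[OF sol], of c "wm powr \<mu>"])
      show "V (x 0) \<le> c" using sol x0 by (simp add: is_solution_def)
      show "c < wm powr \<mu>" by (rule cM)
      show "\<forall>t\<ge>0. c < V (x t) \<and> V (x t) < wm powr \<mu> \<longrightarrow> DV (x t) (f (x t)) \<le> 0"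
      proof (intro allI impI)
        fix t :: real assume t: "0 \<le> t" and band: "c < V (x t) \<and> V (x t) < wm powr \<mu>"
        define v where "v = V (x t)"
        have v: "v > 0" using band c0 by (simp add: v_def)
        define w where "w = v powr (1/\<mu>)"
        have w0: "w > 0" using v by (simp add: w_def)
        have "w < (wm powr \<mu>) powr (1/\<mu>)" unfolding w_def
          by (rule powr_less_mono2) (use mu0 v band v_def in auto)
        then have wwm: "w < wm" using mu0 wm by (simp add: powr_powr)
        have q: "\<alpha>1 * w^2 - \<delta>1 * w + \<alpha>2 > 0" using F(5)[OF w0 wwm] F(6)[OF w0 wwm] wwm by simp
        define R where "R = - \<alpha>1 * v powr (1 + 1/\<mu>) - \<alpha>2 * v powr (1 - 1/\<mu>) + \<delta>1 * v"
        define p where "p = v powr (1/\<mu> - 1)"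
        have p: "p > 0" using v by (simp add: p_def)
        have "p * R = - \<alpha>1 * (v powr (1/\<mu> - 1) * v powr (1 + 1/\<mu>)) - \<alpha>2 * (v powr (1/\<mu> - 1) * v powr (1 - 1/\<mu>))
            + \<delta>1 * (v powr (1/\<mu> - 1) * v)" by (simp add: p_def R_def algebra_simps)
        also have "\<dots> = - (\<alpha>1 * w^2 - \<delta>1 * w + \<alpha>2)"
          unfolding powr_facts[OF v mu0] w_def[symmetric] by simp
        finally have "p * R < 0" using q by simp
        then have "R < 0" using p by (simp add: mult_less_0_iff)
        moreover have "DV (x t) (f (x t)) \<le> R" using vdot[of x] t v by (simp add: R_def v_def)
        ultimately show "DV (x t) (f (x t)) \<le> 0" by simp
      qed
    qed
    have part1: "0 \<in> interior D"
    proof -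
      have op: "open {x. V x < c}" by (rule open_Collect_less[OF Vcont continuous_on_const])
      have "{x. V x < c} \<subseteq> D" using DD by auto
      then have "{x. V x < c} \<subseteq> interior D" using op by (rule interior_maximal)
      moreover have "0 \<in> {x. V x < c}" using V_posdef c0 by simp
      ultimately show ?thesis by blast
    qed
    have part2: "\<forall>x0\<in>D. \<forall>x. is_solution f x0 x \<longrightarrow> (\<forall>t\<ge>0. x t \<in> D)"
      using inv DD by auto
    have T0: "0 \<le> \<mu> * k / ((1 - k) * s)" using mu0 k_bounds s by simp
    note GB = G_B[OF \<alpha>_pos mu0 d2 k_bounds, folded s_def wm_def]
    have part3: "\<forall>x0\<in>D. \<forall>x. is_solution f x0 x \<longrightarrow> (\<exists>t. 0 \<le> t \<and> t \<le> \<mu> * k / ((1 - k) * s) \<and> x t = 0)"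
    proof (intro ballI allI impI)
      fix x0 x assume x0: "x0 \<in> D" and sol: "is_solution f x0 x"
      have "\<forall>t\<ge>0. V (x t) \<le> c" using inv[OF sol] x0 DD by auto
      then have okv: "\<forall>t\<ge>0. V (x t) > 0 \<longrightarrow> V (x t) powr (1/\<mu>) \<le> k * wm"
        using c_root mu0 by (metis less_imp_le powr_mono2 zero_le_divide_1_iff)
      show "\<exists>t. 0 \<le> t \<and> t \<le> \<mu> * k / ((1 - k) * s) \<and> x t = 0"
        by (rule reach[OF sol GB okv T0])
    qed
    have part4: "\<not> (\<delta>1 / (2 * s) \<le> 0)" "\<not> (\<delta>1 / (2 * s) < 1)" using r1 by auto
    show ?thesis unfolding s_def[symmetric] using part1 part2 part3 part4 by blast
  qed
qed



end
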